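(* Let $G$ be a crown-free linear $3$-graph and let $e=\{x,y,z\} \in E(G)$ be an edge with $D(e) \geq \langle 5,5,4\rangle$. Let $$S = \bigcup_{f \in E(G),\ f \cap \{x,y,z\} \neq \emptyset} f$$ be the set of all vertices lying on an edge that meets $\{x,y,z\}$, and let $$E_S = \{f \in E(G) : f \cap S \neq \emptyset\}.$$ Then $|S| = 11$, every vertex in $S$ has degree at most $5$, $|E_S| \leq 13$, and every edge in $E_S$ is a subset of $S$. In other words, the subgraph $G[S]$ is a connected component of $G$.
   Context: A linear $3$-graph $G=(V,E)$ consists of a finite vertex set $V$ and a collection $E$ of $3$-element subsets of $V$ (edges) such that any two distinct edges share at most one vertex. The degree $d(v)$ of a vertex $v$ is the number of edges containing $v$. For an edge $e$ and positive integers $a \geq b \geq c$, write $D(e) \geq \langle a,b,c\rangle$ if one can write $e=\{u,v,w\}$ with $d(u)\geq a$, $d(v) \geq b$, $d(w) \geq c$. The crown $C_{13}$ is the linear $3$-graph on $9$ vertices $\{a,b,c,d,e,f,g,h,i\}$ with edges $\{a,b,c\},\{a,d,e\},\{b,f,g\},\{c,h,i\}$. A linear $3$-graph is crown-free if it contains no copy of $C_{13}$. *)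

theory Defs
  imports Main
begin

definition linear_3graph :: "'a set \<Rightarrow> 'a set set \<Rightarrow> bool" where
  "linear_3graph V E \<longleftrightarrow> finite V \<and> (\<forall>e\<in>E. e \<subseteq> V \<and> card e = 3) \<and>
     (\<forall>e\<in>E. \<forall>f\<in>E. e \<noteq> f \<longrightarrow> card (e \<inter> f) \<le> 1)"

definition degree :: "'a set set \<Rightarrow> 'a \<Rightarrow> nat" where
  "degree E v = card {f \<in> E. v \<in> f}"

definition D_ge :: "'a set set \<Rightarrow> 'a set \<Rightarrow> nat \<Rightarrow> nat \<Rightarrow> nat \<Rightarrow> bool" where
  "D_ge E e a b c \<longleftrightarrow> (\<exists>u v w. e = {u, v, w} \<and>
      degree E u \<ge> a \<and> degree E v \<ge> b \<and> degree E w \<ge> c)"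

definition contains_crown :: "'a set set \<Rightarrow> bool" where
  "contains_crown E \<longleftrightarrow> (\<exists>a b c d e f g h i.
      distinct [a, b, c, d, e, f, g, h, i] \<and>
      {a, b, c} \<in> E \<and> {a, d, e} \<in> E \<and> {b, f, g} \<in> E \<and> {c, h, i} \<in> E)"

definition crown_free :: "'a set set \<Rightarrow> bool" where
  "crown_free E \<longleftrightarrow> \<not> contains_crown E"

end

theory Submission
  imports Defs
begin


lemma lin_eq:
  assumes "linear_3graph V E" "f \<in> E" "g \<in> E" "u \<in> f" "v \<in> f" "u \<in> g" "v \<in> g" "u \<noteq> v"
  shows "f = g"
proof (rule ccontr)
  assume "f \<noteq> g"
  then have "card (f \<inter> g) \<le> 1" using assms(1-3) unfolding linear_3graph_def by blast
  moreover have "finite f" using assms(1,2) unfolding linear_3graph_def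
    by (metis card.infinite zero_neq_numeral)
  then have "finite (f \<inter> g)" by simp
  moreover have "{u,v} \<subseteq> f \<inter> g" using assms by auto
  ultimately have "card {u,v} \<le> 1" by (meson card_mono order_trans)
  then show False using assms(8) by simp
qed

lemma GK:
  assumes "finite b" "\<forall>a\<in>A. a \<inter> b \<noteq> {}" "\<forall>a\<in>A. \<forall>a'\<in>A. a \<noteq> a' \<longrightarrow> a \<inter> a' = {}"
  shows "card A \<le> card b"
proof -
  define g where "g = (\<lambda>a. SOME u. u \<in> a \<inter> b)"
  have g: "g a \<in> a \<inter> b" if "a \<in> A" for a
  proof -
    have "\<exists>u. u \<in> a \<inter> b" using assms(2) that by blast
    then show ?thesis unfolding g_def by (rule someI_ex)
  qed
  have "inj_on g A"
  proof (rule inj_onI)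
    fix a a' assume h: "a \<in> A" "a' \<in> A" "g a = g a'"
    then have "g a \<in> a \<inter> a'" using g[OF h(1)] g[OF h(2)] by simp
    then show "a = a'" using assms(3) h(1,2) by blast
  qed
  moreover have "g ` A \<subseteq> b" using g by blast
  ultimately show ?thesis using card_inj_on_le assms(1) by blast
qed

lemma GK3:
  assumes "card b = 2" "a \<inter> b \<noteq> {}" "a' \<inter> b \<noteq> {}" "a \<inter> a' = {}"
  shows "b \<subseteq> a \<union> a'"
proof -
  obtain u v where uv: "u \<in> a" "u \<in> b" "v \<in> a'" "v \<in> b" using assms by blast
  then have "u \<noteq> v" using assms(4) by auto
  have fin: "finite b" using assms(1) by (metis card.infinite zero_neq_numeral)
  have "{u,v} \<subseteq> b" using uv by simp
  moreover have "card {u,v} = 2" using \<open>u \<noteq> v\<close> by simp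
  ultimately have "{u,v} = b" using card_subset_eq[OF fin] assms(1) by metis
  then show ?thesis using uv by blast
qed

lemma finE: "linear_3graph V E \<Longrightarrow> finite E"
  unfolding linear_3graph_def by (meson Pow_iff finite_Pow_iff rev_finite_subset subsetI)

lemma crown:
  assumes "crown_free E" "distinct [a, b, c, d, e, f, g, h, i]"
      "{a, b, c} \<in> E" "{a, d, e} \<in> E" "{b, f, g} \<in> E" "{c, h, i} \<in> E"
  shows False
  using assms unfolding crown_free_def contains_crown_def by blast

lemma card2E:
  assumes "card a = 2" obtains u v where "a = {u,v}" "u \<noteq> v"
  using assms by (meson card_2_iff)

lemma card2_pick:
  assumes "card a = 2" "u \<in> a" obtains v where "a = {u,v}" "u \<noteq> v"
proof -
  obtain s t where st: "a = {s,t}" "s \<noteq> t" using card2E[OF assms(1)] by blast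
  show ?thesis
  proof (cases "u = s")
    case True then show ?thesis using that st by blast
  next
    case False then have "u = t" using assms(2) st by blast
    then show ?thesis using that st by (metis insert_commute)
  qed
qed

lemma fam:
  assumes finA: "finite A" and finB: "finite B"
    and dA: "\<forall>a\<in>A. \<forall>a'\<in>A. a \<noteq> a' \<longrightarrow> a \<inter> a' = {}"
    and dB: "\<forall>a\<in>B. \<forall>a'\<in>B. a \<noteq> a' \<longrightarrow> a \<inter> a' = {}"
    and cA: "\<forall>a\<in>A. card a = 2" and cB: "\<forall>b\<in>B. card b = 2"
    and A4: "card A \<ge> 4" and B4: "card B \<ge> 4" and c2: "card c = 2"
    and cr: "\<forall>a\<in>A. \<forall>b\<in>B. a \<inter> c = {} \<longrightarrow> b \<inter> c = {} \<longrightarrow> a \<inter> b \<noteq> {}"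
  shows "card A = 4" "card {a\<in>A. a \<inter> c = {}} = 2" "card {a\<in>A. a \<inter> c \<noteq> {}} = 2"
    "\<forall>b\<in>B. b \<inter> c = {} \<longrightarrow> b \<subseteq> \<Union>{a\<in>A. a \<inter> c = {}}"
    "c \<subseteq> \<Union>{a\<in>A. a \<inter> c \<noteq> {}}"
proof -
  have finc: "finite c" using c2 by (metis card.infinite zero_neq_numeral)
  define A0 where "A0 = {a\<in>A. a \<inter> c = {}}"
  define A1 where "A1 = {a\<in>A. a \<inter> c \<noteq> {}}"
  define B0 where "B0 = {a\<in>B. a \<inter> c = {}}"
  define B1 where "B1 = {a\<in>B. a \<inter> c \<noteq> {}}"
  have A1le: "card A1 \<le> 2"
  proof -
    have "card A1 \<le> card c"
    proof (rule GK[OF finc])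
      show "\<forall>a\<in>A1. a \<inter> c \<noteq> {}" unfolding A1_def by blast
      show "\<forall>a\<in>A1. \<forall>a'\<in>A1. a \<noteq> a' \<longrightarrow> a \<inter> a' = {}" using dA unfolding A1_def by blast
    qed
    then show ?thesis using c2 by simp
  qed
  have B1le: "card B1 \<le> 2"
  proof -
    have "card B1 \<le> card c"
    proof (rule GK[OF finc])
      show "\<forall>a\<in>B1. a \<inter> c \<noteq> {}" unfolding B1_def by blast
      show "\<forall>a\<in>B1. \<forall>a'\<in>B1. a \<noteq> a' \<longrightarrow> a \<inter> a' = {}" using dB unfolding B1_def by blast
    qed
    then show ?thesis using c2 by simp
  qed
  have cAsum: "card A = card A0 + card A1"
  proof -
    have "A = A0 \<union> A1" "A0 \<inter> A1 = {}" unfolding A0_def A1_def by auto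
    moreover have "finite A0" "finite A1" using finA unfolding A0_def A1_def by auto
    ultimately show ?thesis by (metis card_Un_disjoint)
  qed
  have cBsum: "card B = card B0 + card B1"
  proof -
    have "B = B0 \<union> B1" "B0 \<inter> B1 = {}" unfolding B0_def B1_def by auto
    moreover have "finite B0" "finite B1" using finB unfolding B0_def B1_def by auto
    ultimately show ?thesis by (metis card_Un_disjoint)
  qed
  have "card B0 \<ge> 2" using cBsum B1le B4 by linarith
  then obtain b0 where b0: "b0 \<in> B0" by fastforce
  have fb0: "finite b0" using b0 cB unfolding B0_def by (simp add: card_ge_0_finite)
  have "card A0 \<le> card b0"
  proof (rule GK[OF fb0])
    show "\<forall>a\<in>A0. a \<inter> b0 \<noteq> {}" using cr b0 unfolding A0_def B0_def by blast
    show "\<forall>a\<in>A0. \<forall>a'\<in>A0. a \<noteq> a' \<longrightarrow> a \<inter> a' = {}" using dA unfolding A0_def by blast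
  qed
  then have A0le: "card A0 \<le> 2" using b0 cB unfolding B0_def by auto
  show cA0: "card {a\<in>A. a \<inter> c = {}} = 2" using A0le A1le cAsum A4 unfolding A0_def by linarith
  show cA1: "card {a\<in>A. a \<inter> c \<noteq> {}} = 2" using A0le A1le cAsum A4 unfolding A1_def by linarith
  show "card A = 4" using A0le A1le cAsum A4 by linarith
  show "\<forall>b\<in>B. b \<inter> c = {} \<longrightarrow> b \<subseteq> \<Union>{a\<in>A. a \<inter> c = {}}"
  proof (intro ballI impI)
    fix b assume b: "b \<in> B" "b \<inter> c = {}"
    obtain a a' where aa: "{a\<in>A. a \<inter> c = {}} = {a,a'}" "a \<noteq> a'" using cA0 by (meson card_2_iff)
    have "a \<in> A" "a' \<in> A" "a \<inter> c = {}" "a' \<inter> c = {}" using aa(1) by blast+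
    moreover have "card b = 2" using cB b by blast
    moreover have "a \<inter> a' = {}" using dA aa(2) \<open>a \<in> A\<close> \<open>a' \<in> A\<close> by blast
    moreover have "a \<inter> b \<noteq> {}" "a' \<inter> b \<noteq> {}" using cr b \<open>a \<in> A\<close> \<open>a' \<in> A\<close> \<open>a \<inter> c = {}\<close> \<open>a' \<inter> c = {}\<close> by blast+
    ultimately have "b \<subseteq> a \<union> a'" using GK3[of b a a'] by blast
    then show "b \<subseteq> \<Union>{a\<in>A. a \<inter> c = {}}" using aa(1) by auto
  qed
  show "c \<subseteq> \<Union>{a\<in>A. a \<inter> c \<noteq> {}}"
  proof -
    obtain a a' where aa: "{a\<in>A. a \<inter> c \<noteq> {}} = {a,a'}" "a \<noteq> a'" using cA1 by (meson card_2_iff)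
    have "a \<in> A" "a' \<in> A" "a \<inter> c \<noteq> {}" "a' \<inter> c \<noteq> {}" using aa(1) by blast+
    moreover have "a \<inter> a' = {}" using dA aa(2) \<open>a \<in> A\<close> \<open>a' \<in> A\<close> by blast
    ultimately have "c \<subseteq> a \<union> a'" using GK3[of c a a'] c2 by blast
    then show ?thesis using aa(1) by auto
  qed
qed

locale cfg =
  fixes V :: "'a set" and E :: "'a set set" and x y z :: 'a
  assumes lin: "linear_3graph V E" and cf: "crown_free E" and eE: "{x,y,z} \<in> E"
    and dxy: "x \<noteq> y" and dyz: "y \<noteq> z" and dxz: "x \<noteq> z"
begin

definition P :: "'a \<Rightarrow> 'a set set" where
  "P v = (\<lambda>f. f - {v}) ` {f\<in>E. v\<in>f \<and> f \<noteq> {x,y,z}}"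

lemma card3: "f \<in> E \<Longrightarrow> card f = 3"
  using lin unfolding linear_3graph_def by blast

lemma P_mem:
  assumes "v \<in> {x,y,z}" "a \<in> P v"
  shows "insert v a \<in> E" "v \<notin> a" "card a = 2" "a \<inter> {x,y,z} = {}"
proof -
  obtain f where f: "f \<in> E" "v \<in> f" "f \<noteq> {x,y,z}" "a = f - {v}" using assms(2) unfolding P_def by blast
  show "insert v a \<in> E" using f by (simp add: insert_absorb)
  show "v \<notin> a" using f by simp
  show "card a = 2" using f card3[OF f(1)] by (simp add: card_Diff_singleton)
  show "a \<inter> {x,y,z} = {}"
  proof (rule ccontr)
    assume "a \<inter> {x,y,z} \<noteq> {}"
    then obtain u where "u \<in> a" "u \<in> {x,y,z}" by blast
    then have "f = {x,y,z}" using lin_eq[OF lin f(1) eE, of u v] f assms(1) by blast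
    then show False using f(3) by simp
  qed
qed

lemma P_iff:
  assumes "v \<in> {x,y,z}"
  shows "a \<in> P v \<longleftrightarrow> insert v a \<in> E \<and> v \<notin> a \<and> insert v a \<noteq> {x,y,z}"
proof
  assume h: "a \<in> P v"
  then obtain f where f: "f \<in> E" "v \<in> f" "f \<noteq> {x,y,z}" "a = f - {v}" unfolding P_def by blast
  then show "insert v a \<in> E \<and> v \<notin> a \<and> insert v a \<noteq> {x,y,z}" by (simp add: insert_absorb)
next
  assume h: "insert v a \<in> E \<and> v \<notin> a \<and> insert v a \<noteq> {x,y,z}"
  then have "a = insert v a - {v}" by simp
  then show "a \<in> P v" unfolding P_def using h by blast
qed

lemma P_disj:
  assumes "v \<in> {x,y,z}" "a \<in> P v" "a' \<in> P v" "a \<noteq> a'"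
  shows "a \<inter> a' = {}"
proof (rule ccontr)
  assume "a \<inter> a' \<noteq> {}"
  then obtain u where u: "u \<in> a" "u \<in> a'" by blast
  have "u \<noteq> v" using u P_mem(2)[OF assms(1,2)] by blast
  then have "insert v a = insert v a'"
    using lin_eq[OF lin P_mem(1)[OF assms(1,2)] P_mem(1)[OF assms(1,3)], of u v] u by blast
  then show False using assms(4) P_mem(2)[OF assms(1,2)] P_mem(2)[OF assms(1,3)]
    by (metis Diff_insert_absorb)
qed

lemma P_cross:
  assumes "v \<in> {x,y,z}" "w \<in> {x,y,z}" "v \<noteq> w" "a \<in> P v" "b \<in> P w"
    "u \<in> a" "u' \<in> a" "u \<in> b" "u' \<in> b"
  shows "u = u'"
proof (rule ccontr)
  assume "u \<noteq> u'"
  then have "insert v a = insert w b"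
    using lin_eq[OF lin P_mem(1)[OF assms(1,4)] P_mem(1)[OF assms(2,5)], of u u'] assms by blast
  then have "w \<in> a" using assms(3) by (metis insertCI insertE)
  then show False using P_mem(4)[OF assms(1,4)] assms(2) by blast
qed

lemma P_crown:
  assumes "a \<in> P x" "b \<in> P y" "c \<in> P z" "a \<inter> b = {}" "a \<inter> c = {}" "b \<inter> c = {}"
  shows False
proof -
  have X: "x \<in> {x,y,z}" "y \<in> {x,y,z}" "z \<in> {x,y,z}" by auto
  obtain a1 a2 where a: "a = {a1,a2}" "a1 \<noteq> a2" using card2E[OF P_mem(3)[OF X(1) assms(1)]] by blast
  obtain b1 b2 where b: "b = {b1,b2}" "b1 \<noteq> b2" using card2E[OF P_mem(3)[OF X(2) assms(2)]] by blast
  obtain c1 c2 where c: "c = {c1,c2}" "c1 \<noteq> c2" using card2E[OF P_mem(3)[OF X(3) assms(3)]] by blast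
  have "distinct [x,y,z,a1,a2,b1,b2,c1,c2]"
    using a b c assms(4-6) P_mem(4)[OF X(1) assms(1)] P_mem(4)[OF X(2) assms(2)]
      P_mem(4)[OF X(3) assms(3)] dxy dyz dxz by auto
  moreover have "{x,a1,a2} \<in> E" using P_mem(1)[OF X(1) assms(1)] a by simp
  moreover have "{y,b1,b2} \<in> E" using P_mem(1)[OF X(2) assms(2)] b by simp
  moreover have "{z,c1,c2} \<in> E" using P_mem(1)[OF X(3) assms(3)] c by simp
  ultimately show False using crown[OF cf _ eE] by blast
qed

lemma P_card:
  assumes "v \<in> {x,y,z}"
  shows "card (P v) = degree E v - 1" "finite (P v)"
proof -
  have inj: "inj_on (\<lambda>f. f - {v}) {f\<in>E. v\<in>f \<and> f \<noteq> {x,y,z}}"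
    by (rule inj_onI) (metis (no_types, lifting) insert_Diff mem_Collect_eq)
  have fin: "finite {f\<in>E. v\<in>f}" using finE[OF lin] by simp
  have "{f\<in>E. v\<in>f \<and> f \<noteq> {x,y,z}} = {f\<in>E. v\<in>f} - {{x,y,z}}" by blast
  moreover have "{x,y,z} \<in> {f\<in>E. v\<in>f}" using eE assms by blast
  ultimately have "card {f\<in>E. v\<in>f \<and> f \<noteq> {x,y,z}} = degree E v - 1"
    unfolding degree_def using fin by (simp add: card_Diff_singleton)
  then show "card (P v) = degree E v - 1" unfolding P_def using card_image[OF inj] by simp
  show "finite (P v)" unfolding P_def
    by (rule finite_imageI, rule finite_subset[OF _ fin], blast)
qed


lemma sub2:
  assumes "b \<subseteq> {q,s}" "card b = 2" shows "b = {q,s}"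
proof (rule card_seteq)
  show "finite {q,s}" by simp
  show "b \<subseteq> {q,s}" by fact
  have "card {q,s} \<le> 2" by (simp add: card_insert_if)
  then show "card {q,s} \<le> card b" using assms(2) by simp
qed

lemma struct_lem:
  assumes dgx: "degree E x \<ge> 5" and dgy: "degree E y \<ge> 5" and dgz: "degree E z \<ge> 4"
  obtains p q r s p' q' r' s' where
    "distinct [x,y,z,p,q,r,s,p',q',r',s']"
    "P x = {{p,q},{r,s},{p',q'},{r',s'}}"
    "P y = {{p,r},{q,s},{p',r'},{q',s'}}"
    "P z \<subseteq> {{p,s},{q,r},{p',s'},{q',r'}}"
    "card (P z) \<ge> 3"
proof -
  have X: "x \<in> {x,y,z}" "y \<in> {x,y,z}" "z \<in> {x,y,z}" by auto
  define A where "A = P x"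
  define B where "B = P y"
  define C where "C = P z"
  have finA: "finite A" and finB: "finite B" and finC: "finite C"
    unfolding A_def B_def C_def using P_card X by auto
  have A4: "card A \<ge> 4" using P_card(1)[OF X(1)] dgx unfolding A_def by simp
  have B4: "card B \<ge> 4" using P_card(1)[OF X(2)] dgy unfolding B_def by simp
  have C3: "card C \<ge> 3" using P_card(1)[OF X(3)] dgz unfolding C_def by simp
  have dA: "\<forall>a\<in>A. \<forall>a'\<in>A. a \<noteq> a' \<longrightarrow> a \<inter> a' = {}" unfolding A_def using P_disj[OF X(1)] by blast
  have dB: "\<forall>a\<in>B. \<forall>a'\<in>B. a \<noteq> a' \<longrightarrow> a \<inter> a' = {}" unfolding B_def using P_disj[OF X(2)] by blast
  have dC: "\<forall>a\<in>C. \<forall>a'\<in>C. a \<noteq> a' \<longrightarrow> a \<inter> a' = {}" unfolding C_def using P_disj[OF X(3)] by blast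
  have cA: "\<forall>a\<in>A. card a = 2" unfolding A_def using P_mem(3)[OF X(1)] by blast
  have cB: "\<forall>a\<in>B. card a = 2" unfolding B_def using P_mem(3)[OF X(2)] by blast
  have cC: "\<forall>a\<in>C. card a = 2" unfolding C_def using P_mem(3)[OF X(3)] by blast
  have crAB: "\<forall>a\<in>A. \<forall>b\<in>B. a \<inter> c = {} \<longrightarrow> b \<inter> c = {} \<longrightarrow> a \<inter> b \<noteq> {}" if "c \<in> C" for c
    using P_crown that unfolding A_def B_def C_def by (metis inf_commute)
  have crBA: "\<forall>a\<in>B. \<forall>b\<in>A. a \<inter> c = {} \<longrightarrow> b \<inter> c = {} \<longrightarrow> a \<inter> b \<noteq> {}" if "c \<in> C" for c
    using crAB[OF that] by (metis inf_commute)
  note famA = fam[OF finA finB dA dB cA cB A4 B4 _ crAB]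
  note famB = fam[OF finB finA dB dA cB cA B4 A4 _ crBA]
  obtain c0 where c0: "c0 \<in> C" using C3 by fastforce
  have c02: "card c0 = 2" using cC c0 by blast
  obtain a1 a2 where a12: "{a\<in>A. a \<inter> c0 = {}} = {a1,a2}" "a1 \<noteq> a2"
    using famA(2)[OF c02 c0] by (meson card_2_iff)
  obtain a3 a4 where a34: "{a\<in>A. a \<inter> c0 \<noteq> {}} = {a3,a4}" "a3 \<noteq> a4"
    using famA(3)[OF c02 c0] by (meson card_2_iff)
  obtain b1 b2 where b12: "{a\<in>B. a \<inter> c0 = {}} = {b1,b2}" "b1 \<noteq> b2"
    using famB(2)[OF c02 c0] by (meson card_2_iff)
  obtain b3 b4 where b34: "{a\<in>B. a \<inter> c0 \<noteq> {}} = {b3,b4}" "b3 \<noteq> b4"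
    using famB(3)[OF c02 c0] by (meson card_2_iff)
  have m1: "a1 \<in> {a\<in>A. a \<inter> c0 = {}}" "a2 \<in> {a\<in>A. a \<inter> c0 = {}}" using a12(1) by simp_all
  have m2: "a3 \<in> {a\<in>A. a \<inter> c0 \<noteq> {}}" "a4 \<in> {a\<in>A. a \<inter> c0 \<noteq> {}}" using a34(1) by simp_all
  have m3: "b1 \<in> {a\<in>B. a \<inter> c0 = {}}" "b2 \<in> {a\<in>B. a \<inter> c0 = {}}" using b12(1) by simp_all
  have m4: "b3 \<in> {a\<in>B. a \<inter> c0 \<noteq> {}}" "b4 \<in> {a\<in>B. a \<inter> c0 \<noteq> {}}" using b34(1) by simp_all
  have inA: "a1 \<in> A" "a2 \<in> A" "a3 \<in> A" "a4 \<in> A" using m1 m2 by simp_all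
  have inB: "b1 \<in> B" "b2 \<in> B" "b3 \<in> B" "b4 \<in> B" using m3 m4 by simp_all
  have ac0: "a1 \<inter> c0 = {}" "a2 \<inter> c0 = {}" using m1 by simp_all
  have bc0: "b1 \<inter> c0 = {}" "b2 \<inter> c0 = {}" using m3 by simp_all
  have ac0': "a3 \<inter> c0 \<noteq> {}" "a4 \<inter> c0 \<noteq> {}" using m2 by simp_all
  have bc0': "b3 \<inter> c0 \<noteq> {}" "b4 \<inter> c0 \<noteq> {}" using m4 by simp_all
  have a13: "a1 \<noteq> a3" "a1 \<noteq> a4" "a2 \<noteq> a3" "a2 \<noteq> a4" using ac0 ac0' by auto
  have b13: "b1 \<noteq> b3" "b1 \<noteq> b4" "b2 \<noteq> b3" "b2 \<noteq> b4" using bc0 bc0' by auto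
  have Aeq: "A = {a1,a2,a3,a4}"
  proof -
    have "A = {a\<in>A. a \<inter> c0 = {}} \<union> {a\<in>A. a \<inter> c0 \<noteq> {}}" by blast
    then have "A = {a1,a2} \<union> {a3,a4}" unfolding a12(1) a34(1) .
    then show ?thesis by blast
  qed
  have Beq: "B = {b1,b2,b3,b4}"
  proof -
    have "B = {a\<in>B. a \<inter> c0 = {}} \<union> {a\<in>B. a \<inter> c0 \<noteq> {}}" by blast
    then have "B = {b1,b2} \<union> {b3,b4}" unfolding b12(1) b34(1) .
    then show ?thesis by blast
  qed
  have ab11: "a1 \<inter> b1 \<noteq> {}" "a2 \<inter> b1 \<noteq> {}" "a1 \<inter> b2 \<noteq> {}" "a2 \<inter> b2 \<noteq> {}"
    using crAB[OF c0] inA inB ac0 bc0 by blast+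
  have dAA: "a1 \<inter> a2 = {}" "a1 \<inter> a3 = {}" "a1 \<inter> a4 = {}" "a2 \<inter> a3 = {}" "a2 \<inter> a4 = {}" "a3 \<inter> a4 = {}"
    using dA inA a12(2) a34(2) a13 by blast+
  have dBB: "b1 \<inter> b2 = {}" "b1 \<inter> b3 = {}" "b1 \<inter> b4 = {}" "b2 \<inter> b3 = {}" "b2 \<inter> b4 = {}" "b3 \<inter> b4 = {}"
    using dB inB b12(2) b34(2) b13 by blast+
  obtain p where p: "p \<in> a1" "p \<in> b1" using ab11(1) by blast
  obtain q where q: "a1 = {p,q}" "p \<noteq> q" using card2_pick[OF _ p(1)] cA inA by blast
  obtain r where r: "r \<in> a2" "r \<in> b1" using ab11(2) by blast
  have "p \<noteq> r" using p r dAA by blast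
  then have b1eq: "b1 = {p,r}" using card2_pick[OF _ p(2)] cB inB r(2) by (metis insertE singletonD)
  obtain s where s: "a2 = {r,s}" "r \<noteq> s" using card2_pick[OF _ r(1)] cA inA by blast
  have "b2 \<subseteq> \<Union>{a1,a2}" using famA(4)[OF c02 c0] inB(2) bc0(2) unfolding a12(1) by blast
  then have "b2 \<subseteq> a1 \<union> a2" by simp
  then have "b2 \<subseteq> {p,q,r,s}" using q(1) s(1) by blast
  moreover have "b2 \<inter> {p,r} = {}" using dBB(1) b1eq by (simp add: Int_commute)
  ultimately have "b2 \<subseteq> {q,s}" by blast
  then have b2eq: "b2 = {q,s}" using sub2[of b2 q s] cB inB(2) by simp
  have a12b: "a1 \<union> a2 = b1 \<union> b2" using q(1) s(1) b1eq b2eq by auto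
  have BinA: "b \<subseteq> a1 \<union> a2 \<union> a3 \<union> a4" if b: "b \<in> B" for b
  proof -
    have cb: "card b = 2" using cB b by blast
    then have fb: "finite b" by (simp add: card_ge_0_finite)
    have "card {c\<in>C. c \<inter> b \<noteq> {}} \<le> card b"
    proof (rule GK[OF fb])
      show "\<forall>a\<in>{c\<in>C. c \<inter> b \<noteq> {}}. a \<inter> b \<noteq> {}" by blast
      show "\<forall>a\<in>{c\<in>C. c \<inter> b \<noteq> {}}. \<forall>a'\<in>{c\<in>C. c \<inter> b \<noteq> {}}. a \<noteq> a' \<longrightarrow> a \<inter> a' = {}"
        using dC by blast
    qed
    then have le2: "card {c\<in>C. c \<inter> b \<noteq> {}} \<le> 2" using cb by simp
    have "{c\<in>C. c \<inter> b \<noteq> {}} \<noteq> C"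
    proof
      assume "{c\<in>C. c \<inter> b \<noteq> {}} = C"
      then show False using le2 C3 by simp
    qed
    then obtain c1 where c1: "c1 \<in> C" "c1 \<inter> b = {}" by blast
    have cc1: "card c1 = 2" using cC c1(1) by blast
    have "b \<inter> c1 = {}" using c1(2) by blast
    then have "b \<subseteq> \<Union>{a\<in>A. a \<inter> c1 = {}}" using famA(4)[OF cc1 c1(1)] b by blast
    moreover have "\<Union>{a\<in>A. a \<inter> c1 = {}} \<subseteq> \<Union>A" by blast
    moreover have "\<Union>A = a1 \<union> a2 \<union> a3 \<union> a4" using Aeq by auto
    ultimately show ?thesis by blast
  qed
  have "b3 \<inter> (b1 \<union> b2) = {}" "b4 \<inter> (b1 \<union> b2) = {}" using dBB by blast+
  then have "b3 \<inter> (a1 \<union> a2) = {}" "b4 \<inter> (a1 \<union> a2) = {}" unfolding a12b by blast+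
  then have b3s: "b3 \<subseteq> a3 \<union> a4" and b4s: "b4 \<subseteq> a3 \<union> a4"
    using BinA[OF inB(3)] BinA[OF inB(4)] by blast+
  have crossAB: "u = v" if "a \<in> A" "b \<in> B" "u \<in> a" "v \<in> a" "u \<in> b" "v \<in> b" for a b u v
    using P_cross[OF X(1) X(2) dxy, of a b u v] that unfolding A_def B_def by blast
  obtain u v where uv: "b3 = {u,v}" "u \<noteq> v" using card2E cB inB by metis
  have "\<not> b3 \<subseteq> a4" using crossAB[OF inA(4) inB(3), of u v] uv by blast
  then obtain p' where p': "p' \<in> a3" "p' \<in> b3" using b3s by blast
  have "\<not> b3 \<subseteq> a3" using crossAB[OF inA(3) inB(3), of u v] uv by blast
  then obtain r' where r': "r' \<in> a4" "r' \<in> b3" using b3s by blast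
  obtain q' where q': "a3 = {p',q'}" "p' \<noteq> q'" using card2_pick[OF _ p'(1)] cA inA by blast
  have "p' \<noteq> r'" using p' r' dAA by blast
  then have b3eq: "b3 = {p',r'}" using card2_pick[OF _ p'(2)] cB inB r'(2) by (metis insertE singletonD)
  obtain s' where s': "a4 = {r',s'}" "r' \<noteq> s'" using card2_pick[OF _ r'(1)] cA inA by blast
  have "b4 \<subseteq> {p',q',r',s'}" using b4s q'(1) s'(1) by blast
  moreover have "b4 \<inter> {p',r'} = {}" using dBB(6) b3eq by (simp add: Int_commute)
  ultimately have "b4 \<subseteq> {q',s'}" by blast
  then have b4eq: "b4 = {q',s'}" using sub2[of b4 q' s'] cB inB(4) by simp
  have ne: "a \<inter> {x,y,z} = {}" if "a \<in> A" for a using P_mem(4)[OF X(1)] that unfolding A_def by blast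
  have ne4: "{p,q} \<inter> {x,y,z} = {}" "{r,s} \<inter> {x,y,z} = {}" "{p',q'} \<inter> {x,y,z} = {}" "{r',s'} \<inter> {x,y,z} = {}"
    using ne[OF inA(1)] ne[OF inA(2)] ne[OF inA(3)] ne[OF inA(4)] q(1) s(1) q'(1) s'(1) by simp_all
  have dd: "{p,q} \<inter> {r,s} = {}" "{p,q} \<inter> {p',q'} = {}" "{p,q} \<inter> {r',s'} = {}"
    "{r,s} \<inter> {p',q'} = {}" "{r,s} \<inter> {r',s'} = {}" "{p',q'} \<inter> {r',s'} = {}"
    using dAA q(1) s(1) q'(1) s'(1) by simp_all
  have dist: "distinct [x,y,z,p,q,r,s,p',q',r',s']"
    using dxy dyz dxz ne4 dd q(2) s(2) q'(2) s'(2) by auto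
  have PX: "P x = {{p,q},{r,s},{p',q'},{r',s'}}" using Aeq q(1) s(1) q'(1) s'(1) unfolding A_def by simp
  have PY: "P y = {{p,r},{q,s},{p',r'},{q',s'}}" using Beq b1eq b2eq b3eq b4eq unfolding B_def by simp
  have UA: "\<Union>A = {p,q,r,s,p',q',r',s'}" using Aeq q(1) s(1) q'(1) s'(1) by auto
  have PZ: "P z \<subseteq> {{p,s},{q,r},{p',s'},{q',r'}}"
  proof
    fix c assume c: "c \<in> P z"
    then have cC': "c \<in> C" unfolding C_def by simp
    have cc: "card c = 2" using cC cC' by blast
    have "c \<subseteq> \<Union>{a\<in>A. a \<inter> c \<noteq> {}}" using famA(5)[OF cc cC'] .
    then have "c \<subseteq> \<Union>A" by blast
    then have cW: "c \<subseteq> {p,q,r,s,p',q',r',s'}" using UA by simp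
    obtain u v where uv: "c = {u,v}" "u \<noteq> v" using card2E[OF cc] by metis
    have nA: "\<not> (u \<in> a \<and> v \<in> a)" if "a \<in> A" for a
      using P_cross[OF X(1) X(3) dxz, of a c u v] that cC' uv unfolding A_def C_def by blast
    have nB: "\<not> (u \<in> a \<and> v \<in> a)" if "a \<in> B" for a
      using P_cross[OF X(2) X(3) dyz, of a c u v] that cC' uv unfolding B_def C_def by blast
    have mix: False if "u' \<in> {p,q,r,s}" "v' \<in> {p',q',r',s'}" "c = {u',v'}" for u' v'
    proof -
      obtain a where a: "a \<in> {{p,q},{r,s}}" "u' \<notin> a"
      proof (cases "u' \<in> {p,q}")
        case True then have "u' \<notin> {r,s}" using dist by auto
        then show ?thesis using that by blast
      next
        case False then show ?thesis using that by blast
      qed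
      obtain b where b: "b \<in> {{p',r'},{q',s'}}" "v' \<notin> b"
      proof (cases "v' \<in> {p',r'}")
        case True then have "v' \<notin> {q',s'}" using dist by auto
        then show ?thesis using that by blast
      next
        case False then show ?thesis using that by blast
      qed
      have "a \<in> P x" using a PX by auto
      moreover have "b \<in> P y" using b PY by auto
      moreover have "a \<inter> b = {}" using a(1) b(1) dist by auto
      moreover have "v' \<notin> a" using a(1) that(2) dist by auto
      then have "a \<inter> c = {}" using a(2) that(3) by auto
      moreover have "u' \<notin> b" using b(1) that(1) dist by auto
      then have "b \<inter> c = {}" using b(2) that(3) by auto
      ultimately show False using P_crown c by blast
    qed
    have m1: "\<not> (u \<in> {p,q,r,s} \<and> v \<in> {p',q',r',s'})" using mix uv by blast
    have m2: "\<not> (v \<in> {p,q,r,s} \<and> u \<in> {p',q',r',s'})" using mix[of v u] uv by (metis insert_commute)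
    have iA: "{p,q} \<in> A" "{r,s} \<in> A" "{p',q'} \<in> A" "{r',s'} \<in> A" using PX unfolding A_def by simp_all
    have iB: "{p,r} \<in> B" "{q,s} \<in> B" "{p',r'} \<in> B" "{q',s'} \<in> B" using PY unfolding B_def by simp_all
    note n = nA[OF iA(1)] nA[OF iA(2)] nA[OF iA(3)] nA[OF iA(4)] nB[OF iB(1)] nB[OF iB(2)] nB[OF iB(3)] nB[OF iB(4)]
    have "u \<in> {p,q,r,s,p',q',r',s'}" "v \<in> {p,q,r,s,p',q',r',s'}" using cW uv by auto
    then have "(u = p \<and> v = s) \<or> (u = s \<and> v = p) \<or> (u = q \<and> v = r) \<or> (u = r \<and> v = q) \<or>
       (u = p' \<and> v = s') \<or> (u = s' \<and> v = p') \<or> (u = q' \<and> v = r') \<or> (u = r' \<and> v = q')"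
      using n m1 m2 uv(2) by auto
    then show "c \<in> {{p,s},{q,r},{p',s'},{q',r'}}" using uv(1) by (auto simp: insert_commute)
  qed
  show ?thesis using that[OF dist PX PY PZ] C3 unfolding C_def by blast
qed

end


lemma edge_thru:
  assumes "linear_3graph V E" "f \<in> E" "v \<in> f"
  shows "\<exists>a b. f = {v,a,b} \<and> v \<noteq> a \<and> a \<noteq> b \<and> v \<noteq> b"
proof -
  have "card f = 3" using assms unfolding linear_3graph_def by blast
  then obtain a b c where abc: "f = {a,b,c}" "a \<noteq> b" "b \<noteq> c" "a \<noteq> c" by (meson card_3_iff)
  show ?thesis
  proof (cases "v = a")
    case True then show ?thesis using abc by blast
  next
    case False
    show ?thesis
    proof (cases "v = b")
      case True then show ?thesis using abc by (metis insert_commute)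
    next
      case False
      then have "v = c" using \<open>v \<noteq> a\<close> assms(3) abc(1) by blast
      then show ?thesis using abc by (metis insert_commute)
    qed
  qed
qed

lemma share2:
  assumes "linear_3graph V E" "f \<in> E" "g \<in> E" "u \<in> f" "v \<in> f" "u \<in> g" "v \<in> g" "u \<noteq> v"
    "w \<in> g" "w \<notin> f"
  shows False
  using lin_eq[OF assms(1-8)] assms(9,10) by blast

lemma ext_lem:
  assumes lin: "linear_3graph V E" and cf: "crown_free E"
    and dist: "distinct [x,y,z,p,q,r,s,p',q',r',s']"
    and e1: "{x,p,q} \<in> E" and e2: "{x,r,s} \<in> E" and e3: "{x,p',q'} \<in> E" and e4: "{x,r',s'} \<in> E"
    and e5: "{y,p,r} \<in> E" and e6: "{y,q,s} \<in> E" and e7: "{y,p',r'} \<in> E" and e8: "{y,q',s'} \<in> E"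
    and h1: "{z,p,s} \<notin> E \<longrightarrow> {z,q,r} \<in> E \<and> {z,p',s'} \<in> E \<and> {z,q',r'} \<in> E"
    and h2: "{z,q,r} \<notin> E \<longrightarrow> {z,p,s} \<in> E \<and> {z,p',s'} \<in> E \<and> {z,q',r'} \<in> E"
    and h3: "{z,p',s'} \<notin> E \<longrightarrow> {z,p,s} \<in> E \<and> {z,q,r} \<in> E \<and> {z,q',r'} \<in> E"
    and h4: "{z,q',r'} \<notin> E \<longrightarrow> {z,p,s} \<in> E \<and> {z,q,r} \<in> E \<and> {z,p',s'} \<in> E"
    and fE: "f \<in> E" and pf: "p \<in> f" and nx: "x \<notin> f" and ny: "y \<notin> f" and nz: "z \<notin> f"
  shows False
proof -
  obtain t1 t2 where f: "f = {p,t1,t2}" "p \<noteq> t1" "t1 \<noteq> t2" "p \<noteq> t2"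
    using edge_thru[OF lin fE pf] by blast
  have tq: "t1 \<noteq> q" "t2 \<noteq> q"
    using share2[OF lin fE e1, of p q x] f nx dist by auto
  have tr: "t1 \<noteq> r" "t2 \<noteq> r"
    using share2[OF lin fE e5, of p r y] f ny dist by auto
  have txyz: "t1 \<noteq> x" "t2 \<noteq> x" "t1 \<noteq> y" "t2 \<noteq> y" "t1 \<noteq> z" "t2 \<noteq> z" using f nx ny nz by auto
  show False
  proof (cases "s \<in> f")
    case True
    then obtain t where ft: "f = {p,s,t}" "t \<noteq> p" "t \<noteq> s" "t \<noteq> q" "t \<noteq> r" "t \<noteq> x" "t \<noteq> y" "t \<noteq> z"
      using f tq tr txyz dist by (auto simp: insert_commute)
    have "{z,p,s} \<notin> E"
    proof
      assume "{z,p,s} \<in> E"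
      then show False using share2[OF lin fE _, of "{z,p,s}" p s z] ft nz dist by auto
    qed
    then have zqr: "{z,q,r} \<in> E" using h1 by blast
    have fE': "{p,s,t} \<in> E" using fE ft by simp
    show False
    proof (cases "t \<in> {p',q'}")
      case False
      have "distinct [x,p,q,p',q',s,t,z,r]" using dist ft False by auto
      moreover have "{q,z,r} \<in> E" using zqr by (simp add: insert_commute)
      ultimately show False using crown[OF cf _ e1 e3 fE'] by blast
    next
      case True
      then have "t \<notin> {r',s'}" using dist by auto
      then have "distinct [x,p,q,r',s',s,t,z,r]" using dist ft by auto
      moreover have "{q,z,r} \<in> E" using zqr by (simp add: insert_commute)
      ultimately show False using crown[OF cf _ e1 e4 fE'] by blast
    qed
  next
    case False
    then have ts: "t1 \<noteq> s" "t2 \<noteq> s" using f by auto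
    have fE': "{p,t1,t2} \<in> E" using fE f by simp
    have yqs: "{q,y,s} \<in> E" using e6 by (simp add: insert_commute)
    show False
    proof (cases "t1 \<notin> {p',q'} \<and> t2 \<notin> {p',q'}")
      case True
      then have "distinct [x,p,q,p',q',t1,t2,y,s]" using dist f tq tr txyz ts by auto
      then show False using crown[OF cf _ e1 e3 fE' yqs] by blast
    next
      case c1: False
      show False
      proof (cases "t1 \<notin> {r',s'} \<and> t2 \<notin> {r',s'}")
        case True
        then have "distinct [x,p,q,r',s',t1,t2,y,s]" using dist f tq tr txyz ts by auto
        then show False using crown[OF cf _ e1 e4 fE' yqs] by blast
      next
        case c2: False
        have "(t1 = p' \<and> t2 = r') \<or> (t1 = r' \<and> t2 = p') \<or> (t1 = q' \<and> t2 = s') \<or> (t1 = s' \<and> t2 = q') \<or>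
              (t1 = p' \<and> t2 = s') \<or> (t1 = s' \<and> t2 = p') \<or> (t1 = q' \<and> t2 = r') \<or> (t1 = r' \<and> t2 = q')"
          using c1 c2 f(3) dist by auto
        moreover have False if "f = {p,p',r'}"
          using share2[OF lin fE e7, of p' r' y] that ny dist by auto
        moreover have False if "f = {p,q',s'}"
          using share2[OF lin fE e8, of q' s' y] that ny dist by auto
        moreover have False if ff: "f = {p,p',s'}"
        proof -
          have "{z,p',s'} \<notin> E"
          proof
            assume "{z,p',s'} \<in> E"
            then show False using share2[OF lin fE _, of "{z,p',s'}" p' s' z] ff nz dist by auto
          qed
          then have "{z,p,s} \<in> E" "{z,q',r'} \<in> E" using h3 by blast+
          moreover have "{p,p',s'} \<in> E" using fE ff by simp
          moreover have "{s,x,r} \<in> E" using e2 by (simp add: insert_commute)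
          moreover have "distinct [z,p,s,q',r',p',s',x,r]" using dist by auto
          ultimately show False using crown[OF cf] by blast
        qed
        moreover have False if ff: "f = {p,q',r'}"
        proof -
          have "{z,q',r'} \<notin> E"
          proof
            assume "{z,q',r'} \<in> E"
            then show False using share2[OF lin fE _, of "{z,q',r'}" q' r' z] ff nz dist by auto
          qed
          then have "{z,p,s} \<in> E" "{z,p',s'} \<in> E" using h4 by blast+
          moreover have "{p,q',r'} \<in> E" using fE ff by simp
          moreover have "{s,x,r} \<in> E" using e2 by (simp add: insert_commute)
          moreover have "distinct [z,p,s,p',s',q',r',x,r]" using dist by auto
          ultimately show False using crown[OF cf] by blast
        qed
        ultimately show False using f(1) by (auto simp: insert_commute)
      qed
    qed
  qed
qed



lemma three_of_four:
  assumes "C \<subseteq> {a,b,c,d}" "card C \<ge> 3" "a \<notin> C"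
  shows "b \<in> C \<and> c \<in> C \<and> d \<in> C"
proof -
  have "C \<subseteq> {b,c,d}" using assms(1,3) by blast
  moreover have "card {b,c,d} \<le> 3" using card_length[of "[b,c,d]"] by simp
  ultimately have "C = {b,c,d}" using card_seteq[of "{b,c,d}" C] assms(2) by simp
  then show ?thesis by simp
qed

lemma three_of_four_all:
  assumes "C \<subseteq> {a,b,c,d}" "card C \<ge> 3"
  shows "(a \<notin> C \<longrightarrow> b \<in> C \<and> c \<in> C \<and> d \<in> C) \<and> (b \<notin> C \<longrightarrow> a \<in> C \<and> c \<in> C \<and> d \<in> C) \<and>
         (c \<notin> C \<longrightarrow> a \<in> C \<and> b \<in> C \<and> d \<in> C) \<and> (d \<notin> C \<longrightarrow> a \<in> C \<and> b \<in> C \<and> c \<in> C)"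
proof (intro conjI impI)
  have s1: "C \<subseteq> {b,a,c,d}" using assms(1) by blast
  have s2: "C \<subseteq> {c,a,b,d}" using assms(1) by blast
  have s3: "C \<subseteq> {d,a,b,c}" using assms(1) by blast
  note t0 = three_of_four[OF assms(1,2)]
  note t1 = three_of_four[OF s1 assms(2)]
  note t2 = three_of_four[OF s2 assms(2)]
  note t3 = three_of_four[OF s3 assms(2)]
  show "b \<in> C" "c \<in> C" "d \<in> C" if "a \<notin> C" using t0 that by blast+
  show "a \<in> C" "c \<in> C" "d \<in> C" if "b \<notin> C" using t1 that by blast+
  show "a \<in> C" "b \<in> C" "d \<in> C" if "c \<notin> C" using t2 that by blast+
  show "a \<in> C" "b \<in> C" "c \<in> C" if "d \<notin> C" using t3 that by blast+
qed

lemma card4: "card {a,b,c,d} \<le> 4"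
  using card_length[of "[a,b,c,d]"] by simp

lemma le1:
  assumes "linear_3graph V E" "u \<noteq> v"
  shows "card {f\<in>E. u \<in> f \<and> v \<in> f} \<le> 1"
proof -
  have fin: "finite {f\<in>E. u \<in> f \<and> v \<in> f}" using finE[OF assms(1)] by simp
  have all: "\<forall>f\<in>{f\<in>E. u \<in> f \<and> v \<in> f}. \<forall>g\<in>{f\<in>E. u \<in> f \<and> v \<in> f}. f = g"
    using lin_eq[OF assms(1)] assms(2) by blast
  show ?thesis using card_le_Suc0_iff_eq[OF fin] all by simp
qed

context cfg
begin

lemma to_P:
  assumes "v \<in> {x,y,z}" "f \<in> E" "v \<in> f" "f \<noteq> {x,y,z}"
  shows "f - {v} \<in> P v" "f = insert v (f - {v})"
proof -
  show "f - {v} \<in> P v" unfolding P_def using assms by (intro imageI) simp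
  show "f = insert v (f - {v})" using assms(3) by (simp add: insert_absorb)
qed

lemma main:
  assumes dgx: "degree E x \<ge> 5" and dgy: "degree E y \<ge> 5" and dgz: "degree E z \<ge> 4"
  defines "S \<equiv> \<Union> {f \<in> E. f \<inter> {x, y, z} \<noteq> {}}"
  defines "E_S \<equiv> {f \<in> E. f \<inter> S \<noteq> {}}"
  shows "card S = 11 \<and> (\<forall>v\<in>S. degree E v \<le> 5) \<and> card E_S \<le> 13 \<and> (\<forall>f\<in>E_S. f \<subseteq> S)"
proof -
  have X: "x \<in> {x,y,z}" "y \<in> {x,y,z}" "z \<in> {x,y,z}" by auto
  obtain p q r s p' q' r' s' where
    dist: "distinct [x,y,z,p,q,r,s,p',q',r',s']" and
    PX: "P x = {{p,q},{r,s},{p',q'},{r',s'}}" and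
    PY: "P y = {{p,r},{q,s},{p',r'},{q',s'}}" and
    PZ: "P z \<subseteq> {{p,s},{q,r},{p',s'},{q',r'}}" and
    PZ3: "card (P z) \<ge> 3"
    by (rule struct_lem[OF dgx dgy dgz])
  have ex: "insert x a \<in> E" if "a \<in> P x" for a using P_mem(1)[OF X(1) that] .
  have ey: "insert y a \<in> E" if "a \<in> P y" for a using P_mem(1)[OF X(2) that] .
  have e1: "{x,p,q} \<in> E" "{x,r,s} \<in> E" "{x,p',q'} \<in> E" "{x,r',s'} \<in> E" using ex PX by auto
  have e2: "{y,p,r} \<in> E" "{y,q,s} \<in> E" "{y,p',r'} \<in> E" "{y,q',s'} \<in> E" using ey PY by auto
  have zi: "D \<in> P z \<longleftrightarrow> insert z D \<in> E" if "D \<subseteq> {p,q,r,s,p',q',r',s'}" for D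
  proof -
    have "z \<notin> D" using that dist by auto
    moreover have "insert z D \<noteq> {x,y,z}" using that dist by auto
    ultimately show ?thesis using P_iff[OF X(3)] by blast
  qed
  have zps: "{p,s} \<in> P z \<longleftrightarrow> {z,p,s} \<in> E" using zi[of "{p,s}"] by simp
  have zqr: "{q,r} \<in> P z \<longleftrightarrow> {z,q,r} \<in> E" using zi[of "{q,r}"] by simp
  have zps': "{p',s'} \<in> P z \<longleftrightarrow> {z,p',s'} \<in> E" using zi[of "{p',s'}"] by simp
  have zqr': "{q',r'} \<in> P z \<longleftrightarrow> {z,q',r'} \<in> E" using zi[of "{q',r'}"] by simp
  have T: "({p,s} \<notin> P z \<longrightarrow> {q,r} \<in> P z \<and> {p',s'} \<in> P z \<and> {q',r'} \<in> P z) \<and>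
     ({q,r} \<notin> P z \<longrightarrow> {p,s} \<in> P z \<and> {p',s'} \<in> P z \<and> {q',r'} \<in> P z) \<and>
     ({p',s'} \<notin> P z \<longrightarrow> {p,s} \<in> P z \<and> {q,r} \<in> P z \<and> {q',r'} \<in> P z) \<and>
     ({q',r'} \<notin> P z \<longrightarrow> {p,s} \<in> P z \<and> {q,r} \<in> P z \<and> {p',s'} \<in> P z)"
    by (rule three_of_four_all[OF PZ PZ3])
  then have h1: "{z,p,s} \<notin> E \<longrightarrow> {z,q,r} \<in> E \<and> {z,p',s'} \<in> E \<and> {z,q',r'} \<in> E"
    and h2: "{z,q,r} \<notin> E \<longrightarrow> {z,p,s} \<in> E \<and> {z,p',s'} \<in> E \<and> {z,q',r'} \<in> E"
    and h3: "{z,p',s'} \<notin> E \<longrightarrow> {z,p,s} \<in> E \<and> {z,q,r} \<in> E \<and> {z,q',r'} \<in> E"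
    and h4: "{z,q',r'} \<notin> E \<longrightarrow> {z,p,s} \<in> E \<and> {z,q,r} \<in> E \<and> {z,p',s'} \<in> E"
    unfolding zps zqr zps' zqr' by blast+
  note EN = e1[simplified insert_commute] e2[simplified insert_commute]
  note HN = h1[simplified insert_commute] h2[simplified insert_commute] h3[simplified insert_commute] h4[simplified insert_commute]
  have X8: False if f: "f \<in> E" "w \<in> f" "x \<notin> f" "y \<notin> f" "z \<notin> f"
    and w: "w \<in> {p,q,r,s,p',q',r',s'}" for f w
  proof -
    have "w = p \<or> w = q \<or> w = r \<or> w = s \<or> w = p' \<or> w = q' \<or> w = r' \<or> w = s'" using w by simp
    then show False
    proof (elim disjE)
      assume w': "w = p"
      have d: "distinct [x,y,z,p,q,r,s,p',q',r',s']" using dist by auto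
      show False
        apply (rule ext_lem[OF lin cf d, of f])
        apply (simp_all (no_asm) only: insert_commute)
        apply (rule EN f(1))+
        using HN f w' by blast+
    next
      assume w': "w = q"
      have d: "distinct [x,y,z,q,p,s,r,p',q',r',s']" using dist by auto
      show False
        apply (rule ext_lem[OF lin cf d, of f])
        apply (simp_all (no_asm) only: insert_commute)
        apply (rule EN f(1))+
        using HN f w' by blast+
    next
      assume w': "w = r"
      have d: "distinct [x,y,z,r,s,p,q,p',q',r',s']" using dist by auto
      show False
        apply (rule ext_lem[OF lin cf d, of f])
        apply (simp_all (no_asm) only: insert_commute)
        apply (rule EN f(1))+
        using HN f w' by blast+
    next
      assume w': "w = s"
      have d: "distinct [x,y,z,s,r,q,p,p',q',r',s']" using dist by auto
      show False
        apply (rule ext_lem[OF lin cf d, of f])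
        apply (simp_all (no_asm) only: insert_commute)
        apply (rule EN f(1))+
        using HN f w' by blast+
    next
      assume w': "w = p'"
      have d: "distinct [x,y,z,p',q',r',s',p,q,r,s]" using dist by auto
      show False
        apply (rule ext_lem[OF lin cf d, of f])
        apply (simp_all (no_asm) only: insert_commute)
        apply (rule EN f(1))+
        using HN f w' by blast+
    next
      assume w': "w = q'"
      have d: "distinct [x,y,z,q',p',s',r',p,q,r,s]" using dist by auto
      show False
        apply (rule ext_lem[OF lin cf d, of f])
        apply (simp_all (no_asm) only: insert_commute)
        apply (rule EN f(1))+
        using HN f w' by blast+
    next
      assume w': "w = r'"
      have d: "distinct [x,y,z,r',s',p',q',p,q,r,s]" using dist by auto
      show False
        apply (rule ext_lem[OF lin cf d, of f])
        apply (simp_all (no_asm) only: insert_commute)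
        apply (rule EN f(1))+
        using HN f w' by blast+
    next
      assume w': "w = s'"
      have d: "distinct [x,y,z,s',r',q',p',p,q,r,s]" using dist by auto
      show False
        apply (rule ext_lem[OF lin cf d, of f])
        apply (simp_all (no_asm) only: insert_commute)
        apply (rule EN f(1))+
        using HN f w' by blast+
    qed
  qed
  define W where "W = {p,q,r,s,p',q',r',s'}"
  have Wm: "f \<inter> {x,y,z} \<noteq> {}" if fw: "f \<in> E" "f \<inter> W \<noteq> {}" for f
  proof (rule ccontr)
    assume "\<not> f \<inter> {x,y,z} \<noteq> {}"
    then have "x \<notin> f" "y \<notin> f" "z \<notin> f" by auto
    moreover obtain w where "w \<in> f" "w \<in> W" using fw(2) by blast
    ultimately show False using X8[OF fw(1)] unfolding W_def by blast
  qed
  have cPx: "card (P x) \<le> 4" using PX card4 by simp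
  have cPy: "card (P y) \<le> 4" using PY card4 by simp
  have cPz: "card (P z) \<le> 4"
    using card_mono[OF _ PZ] card4[of "{p,s}" "{q,r}" "{p',s'}" "{q',r'}"] by simp
  have UP: "\<Union>(P v) \<subseteq> W" if "v \<in> {x,y,z}" for v
  proof -
    have "\<Union>(P x) \<subseteq> W" "\<Union>(P y) \<subseteq> W" "\<Union>(P z) \<subseteq> W"
      using PX PY PZ unfolding W_def by auto
    then show ?thesis using that by blast
  qed
  have decomp: "f = {x,y,z} \<or> (\<exists>v\<in>{x,y,z}. f - {v} \<in> P v \<and> f = insert v (f - {v}))"
    if fh: "f \<in> E" "f \<inter> {x,y,z} \<noteq> {}" for f
  proof (cases "f = {x,y,z}")
    case False
    obtain v where v: "v \<in> f" "v \<in> {x,y,z}" using fh(2) by blast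
    then show ?thesis using to_P[OF v(2) fh(1) v(1) False] by blast
  qed simp
  have meet: "f \<subseteq> {x,y,z} \<union> W" if "f \<in> E" "f \<inter> {x,y,z} \<noteq> {}" for f
    using decomp[OF that] UP by blast
  have Seq: "S = {x,y,z} \<union> W"
  proof
    show "S \<subseteq> {x,y,z} \<union> W" unfolding S_def using meet by blast
    have "{x,y,z} \<subseteq> S" unfolding S_def using eE by blast
    moreover have "{x,p,q} \<subseteq> S" "{x,r,s} \<subseteq> S" "{x,p',q'} \<subseteq> S" "{x,r',s'} \<subseteq> S"
      unfolding S_def using e1 by blast+
    ultimately show "{x,y,z} \<union> W \<subseteq> S" unfolding W_def by blast
  qed
  have c11: "card S = 11"
  proof -
    have "S = set [x,y,z,p,q,r,s,p',q',r',s']" using Seq unfolding W_def by auto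
    then show ?thesis using distinct_card[OF dist] by simp
  qed
  have degx: "degree E v \<le> 5" if "v \<in> {x,y,z}" for v
  proof -
    have "card (P v) \<le> 4" using that cPx cPy cPz by blast
    moreover have "card (P v) = degree E v - 1" using P_card(1)[OF that] .
    moreover have "degree E v \<ge> 4" using that dgx dgy dgz by auto
    ultimately show ?thesis by linarith
  qed
  have degw: "degree E v \<le> 5" if "v \<in> W" for v
  proof -
    have vx: "v \<noteq> x" "v \<noteq> y" "v \<noteq> z" using that dist unfolding W_def by auto
    have "{f\<in>E. v \<in> f} \<subseteq> {f\<in>E. v \<in> f \<and> x \<in> f} \<union> {f\<in>E. v \<in> f \<and> y \<in> f} \<union> {f\<in>E. v \<in> f \<and> z \<in> f}"
    proof
      fix f assume "f \<in> {f\<in>E. v \<in> f}"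
      then have "f \<in> E" "f \<inter> W \<noteq> {}" "v \<in> f" using that by auto
      then have "f \<inter> {x,y,z} \<noteq> {}" using Wm by blast
      then show "f \<in> {f\<in>E. v \<in> f \<and> x \<in> f} \<union> {f\<in>E. v \<in> f \<and> y \<in> f} \<union> {f\<in>E. v \<in> f \<and> z \<in> f}"
        using \<open>f \<in> E\<close> \<open>v \<in> f\<close> by blast
    qed
    moreover have "finite E" using finE[OF lin] .
    ultimately have "degree E v \<le> card ({f\<in>E. v \<in> f \<and> x \<in> f} \<union> {f\<in>E. v \<in> f \<and> y \<in> f} \<union> {f\<in>E. v \<in> f \<and> z \<in> f})"
      unfolding degree_def by (intro card_mono) auto
    also have "\<dots> \<le> card {f\<in>E. v \<in> f \<and> x \<in> f} + card {f\<in>E. v \<in> f \<and> y \<in> f} + card {f\<in>E. v \<in> f \<and> z \<in> f}"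
      using card_Un_le[of "{f\<in>E. v \<in> f \<and> x \<in> f} \<union> {f\<in>E. v \<in> f \<and> y \<in> f}" "{f\<in>E. v \<in> f \<and> z \<in> f}"]
        card_Un_le[of "{f\<in>E. v \<in> f \<and> x \<in> f}" "{f\<in>E. v \<in> f \<and> y \<in> f}"] by linarith
    also have "\<dots> \<le> 3" using le1[OF lin vx(1)] le1[OF lin vx(2)] le1[OF lin vx(3)] by simp
    finally show ?thesis by simp
  qed
  have ES_meet: "f \<inter> {x,y,z} \<noteq> {}" if "f \<in> E_S" for f
  proof -
    have "f \<in> E" "f \<inter> ({x,y,z} \<union> W) \<noteq> {}" using that Seq unfolding E_S_def by auto
    then show ?thesis using Wm by blast
  qed
  have sub: "\<forall>f\<in>E_S. f \<subseteq> S"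
    using ES_meet unfolding S_def E_S_def by blast
  have "E_S \<subseteq> {{x,y,z}} \<union> insert x ` P x \<union> insert y ` P y \<union> insert z ` P z"
  proof
    fix f assume f: "f \<in> E_S"
    then have "f \<in> E" unfolding E_S_def by simp
    from decomp[OF this ES_meet[OF f]]
    show "f \<in> {{x,y,z}} \<union> insert x ` P x \<union> insert y ` P y \<union> insert z ` P z" by blast
  qed
  moreover have "finite (P x)" "finite (P y)" "finite (P z)" using P_card(2) X by auto
  ultimately have "card E_S \<le> card ({{x,y,z}} \<union> insert x ` P x \<union> insert y ` P y \<union> insert z ` P z)"
    by (intro card_mono) auto
  also have "\<dots> \<le> 1 + card (insert x ` P x) + card (insert y ` P y) + card (insert z ` P z)"
    using card_Un_le[of "{{x,y,z}} \<union> insert x ` P x \<union> insert y ` P y" "insert z ` P z"]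
      card_Un_le[of "{{x,y,z}} \<union> insert x ` P x" "insert y ` P y"]
      card_Un_le[of "{{x,y,z}}" "insert x ` P x"] by simp
  also have "\<dots> \<le> 1 + card (P x) + card (P y) + card (P z)"
    using card_image_le[OF \<open>finite (P x)\<close>, of "insert x"] card_image_le[OF \<open>finite (P y)\<close>, of "insert y"]
      card_image_le[OF \<open>finite (P z)\<close>, of "insert z"] by linarith
  also have "\<dots> \<le> 13" using cPx cPy cPz by linarith
  finally have c13: "card E_S \<le> 13" .
  have dg: "\<forall>v\<in>S. degree E v \<le> 5" using degx degw Seq by blast
  show ?thesis using c11 dg c13 sub by blast
qed

end

theorem lemma2p1:
  fixes V :: "'a set" and E :: "'a set set" and x y z :: 'a
  assumes "linear_3graph V E"
    and "crown_free E"
    and "{x, y, z} \<in> E"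
    and "D_ge E {x, y, z} 5 5 4"
  defines "S \<equiv> \<Union> {f \<in> E. f \<inter> {x, y, z} \<noteq> {}}"
  defines "E_S \<equiv> {f \<in> E. f \<inter> S \<noteq> {}}"
  shows "card S = 11 \<and> (\<forall>v\<in>S. degree E v \<le> 5) \<and> card E_S \<le> 13 \<and> (\<forall>f\<in>E_S. f \<subseteq> S)"
proof -
  from assms(4) obtain u v w where uvw: "{x,y,z} = {u,v,w}" "degree E u \<ge> 5" "degree E v \<ge> 5" "degree E w \<ge> 4"
    unfolding D_ge_def by blast
  have c3: "card {u,v,w} = 3" using assms(1,3) uvw(1) unfolding linear_3graph_def by metis
  have d: "u \<noteq> v" "v \<noteq> w" "u \<noteq> w"
  proof -
    show "u \<noteq> v"
    proof
      assume "u = v" then have "card {u,v,w} \<le> 2" using card_length[of "[u,w]"] by simp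
      then show False using c3 by simp
    qed
    show "v \<noteq> w"
    proof
      assume "v = w" then have "card {u,v,w} \<le> 2" using card_length[of "[u,w]"] by simp
      then show False using c3 by simp
    qed
    show "u \<noteq> w"
    proof
      assume "u = w" then have "card {u,v,w} \<le> 2" using card_length[of "[u,v]"] by (simp add: insert_commute)
      then show False using c3 by simp
    qed
  qed
  interpret cfg V E u v w
    using assms(1,2,3) uvw(1) d by unfold_locales auto
  show ?thesis unfolding E_S_def S_def uvw(1) by (rule main[OF uvw(2-4)])
qed

end
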